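(* For every $n\ge1$, the map $e\mapsto d(e)$ is a bijection from $\mathbf{I}_n(021)$ onto $\mathcal{A}_n$, and for every $e\in\mathbf{I}_n(021)$, $$(\mathrm{dist},\mathrm{asc},\mathrm{zero},\mathrm{ema})(e)=(\mathrm{turn},\mathrm{segment},\mathrm{red},\mathrm{return})(d(e)).$$
   Context: $\mathbf{I}_n=\{(e_1,\dots,e_n): 0\le e_i\le i-1\}$; $\mathbf I_n(021)$ is the set of $e\in\mathbf I_n$ containing no indices $i<j<k$ with $e_i<e_k<e_j$ (equivalently, whose positive entries are weakly increasing). For $e\in\mathbf I_n$: $\mathrm{dist}(e)$ is the number of distinct positive values among the entries; $\mathrm{asc}(e)=|\{i\in[n-1]:e_i<e_{i+1}\}|$; $\mathrm{zero}(e)=|\{i:e_i=0\}|$; $\mathrm{ema}(e)=|\{i:e_i=i-1\}|$. A two-colored Dyck path of length $n$ is a lattice path from $(0,0)$ to $(n,n)$ with unit east and north steps never going above $y=x$, each east step colored black or red; it is encoded by $D=d_1\cdots d_n$ where $d_i$ (the height of the $i$-th east step) is the number of north steps before it, so $0\le d_1\le\dots\le d_n$, $d_i\le i-1$, together with the colors. The outline of $e\in\mathbf I_n(021)$ is the two-colored Dyck path $d(e)$ with $d_i=e_i$ and step $i$ black if $e_i\ne0$, and $d_i=\max\{e_1,\dots,e_i\}$ and step $i$ red if $e_i=0$. $\mathcal{A}_n$ is the set of two-colored Dyck paths of length $n$ such that (c-1) all east steps of height $0$ are red and (c-2) the first east step of each positive height is black. For a two-colored Dyck path $D$: $\mathrm{turn}(D)$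 is the number of east steps immediately followed by a north step, minus $1$ (equivalently $|\{i\in[n-1]: d_i<d_{i+1}\}|$); $\mathrm{segment}(D)$ is the number of maximal runs of consecutive east steps (consecutive indices) that are all black and have the same height; $\mathrm{red}(D)$ is the number of red east steps; $\mathrm{return}(D)$ is the number of lattice points $(i,i)$, $1\le i\le n$, on $D$ (equivalently $|\{i\in[n]:d_i=i-1\}|$). *)

theory Defs
  imports Main
begin

(* Sequences of length n are lists; list position i (0-based) corresponds to
   the paper's index i+1. Hence the constraint 0 <= e_i <= i-1 becomes e!i <= i. *)

definition inv_seqs :: "nat \<Rightarrow> nat list set" where
  "inv_seqs n = {e. length e = n \<and> (\<forall>i<n. e ! i \<le> i)}"

definition avoids021 :: "nat list \<Rightarrow> bool" where
  "avoids021 e \<longleftrightarrow> \<not> (\<exists>i j k. i < j \<and> j < k \<and> k < length e \<and> e ! i < e ! k \<and> e ! k < e ! j)"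

definition I021 :: "nat \<Rightarrow> nat list set" where
  "I021 n = {e \<in> inv_seqs n. avoids021 e}"

definition dist :: "nat list \<Rightarrow> nat" where
  "dist e = card {v \<in> set e. v > 0}"

definition asc :: "nat list \<Rightarrow> nat" where
  "asc e = card {i. i + 1 < length e \<and> e ! i < e ! (i + 1)}"

definition zero :: "nat list \<Rightarrow> nat" where
  "zero e = card {i. i < length e \<and> e ! i = 0}"

definition ema :: "nat list \<Rightarrow> nat" where
  "ema e = card {i. i < length e \<and> e ! i = i}"

(* Two-colored Dyck paths: (heights d, colours c); c ! i = True means step i is red,
   False means black. *)
type_synonym cdyck = "nat list \<times> bool list"

definition colored_dyck :: "nat \<Rightarrow> cdyck set" where
  "colored_dyck n = {(d, c). length d = n \<and> length c = n \<and> sorted d \<and> (\<forall>i<n. d ! i \<le> i)}"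

(* condition (c-1): height-0 steps are red;
   condition (c-2): the first east step of each positive height is black *)
definition A_paths :: "nat \<Rightarrow> cdyck set" where
  "A_paths n = {(d, c) \<in> colored_dyck n.
      (\<forall>i<n. d ! i = 0 \<longrightarrow> c ! i) \<and>
      (\<forall>i<n. d ! i > 0 \<and> (\<forall>j<i. d ! j \<noteq> d ! i) \<longrightarrow> \<not> c ! i)}"

definition outline :: "nat list \<Rightarrow> cdyck" where
  "outline e = (map (\<lambda>i. if e ! i \<noteq> 0 then e ! i else Max (set (take (i + 1) e))) [0..<length e],
                map (\<lambda>i. e ! i = 0) [0..<length e])"

definition turn :: "cdyck \<Rightarrow> nat" where
  "turn D = card {i. i + 1 < length (fst D) \<and> fst D ! i < fst D ! (i + 1)}"

(* number of maximal runs of consecutive black steps of equal height: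
   count black steps that start such a run *)
definition segment :: "cdyck \<Rightarrow> nat" where
  "segment D = (let d = fst D; c = snd D in
     card {i. i < length d \<and> \<not> c ! i \<and>
              (i = 0 \<or> c ! (i - 1) \<or> d ! (i - 1) \<noteq> d ! i)})"

definition red :: "cdyck \<Rightarrow> nat" where
  "red D = card {i. i < length (snd D) \<and> snd D ! i}"

definition return :: "cdyck \<Rightarrow> nat" where
  "return D = card {i. i < length (fst D) \<and> fst D ! i = i}"

end

theory Submission
  imports Defs
begin

definition pm :: "nat list \<Rightarrow> nat \<Rightarrow> nat" where
  "pm e i = Max ((!) e ` {..i})"

lemma pm_ge: "j \<le> i \<Longrightarrow> e ! j \<le> pm e i"
  unfolding pm_def by (rule Max_ge) auto

lemma pm_in: "\<exists>j\<le>i. pm e i = e ! j"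
proof -
  have "pm e i \<in> (!) e ` {..i}" unfolding pm_def by (rule Max_in) auto
  then show ?thesis by auto
qed

lemma pm_mono: "i \<le> i' \<Longrightarrow> pm e i \<le> pm e i'"
  by (metis pm_in pm_ge le_trans)

lemma I021D:
  assumes "e \<in> I021 n"
  shows "length e = n" "\<And>i. i < n \<Longrightarrow> e ! i \<le> i"
  using assms by (auto simp: I021_def inv_seqs_def)

lemma I021_mono:
  assumes "e \<in> I021 n" "j < k" "k < n" "0 < e ! j" "0 < e ! k"
  shows "e ! j \<le> e ! k"
proof (rule ccontr)
  assume "\<not> e ! j \<le> e ! k"
  have "e ! 0 = 0" using I021D(2)[OF assms(1), of 0] assms by auto
  hence "0 < j" using assms(4) by (cases j) auto
  hence "\<exists>i j' k'. i < j' \<and> j' < k' \<and> k' < length e \<and> e ! i < e ! k' \<and> e ! k' < e ! j'"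
    using assms \<open>e ! 0 = 0\<close> \<open>\<not> e ! j \<le> e ! k\<close> I021D(1)[OF assms(1)]
    by (intro exI[of _ 0] exI[of _ j] exI[of _ k]) auto
  thus False using assms(1) by (auto simp: I021_def avoids021_def)
qed

lemma pm_le: "\<forall>j<n. e ! j \<le> j \<Longrightarrow> i < n \<Longrightarrow> pm e i \<le> i"
proof -
  assume a: "\<forall>j<n. e ! j \<le> j" "i < n"
  obtain j where "j \<le> i" "pm e i = e ! j" using pm_in by blast
  thus ?thesis using a by (metis le_trans le_less_trans)
qed

lemma pm_eq:
  assumes "e \<in> I021 n" "i < n" "e ! i \<noteq> 0"
  shows "pm e i = e ! i"
proof -
  obtain j where j: "j \<le> i" "pm e i = e ! j" using pm_in by blast
  have "e ! j \<le> e ! i"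
  proof (cases "j = i")
    case False
    show ?thesis
    proof (cases "e ! j = 0")
      case False thus ?thesis using I021_mono[OF assms(1), of j i] j \<open>j \<noteq> i\<close> assms by auto
    qed simp
  qed simp
  thus ?thesis using j pm_ge[of i i e] by auto
qed

lemma outline_eq:
  assumes "e \<in> I021 n"
  shows "outline e = (map (pm e) [0..<n], map (\<lambda>i. e ! i = 0) [0..<n])"
proof -
  have len: "length e = n" using I021D(1)[OF assms] .
  have "Max (set (take (i + 1) e)) = pm e i" if "i < n" for i
  proof -
    have "set (take (Suc i) e) = (!) e ` {..<Suc i}"
      using nth_image[of "Suc i" e] that len by (simp add: atLeast0LessThan)
    also have "{..<Suc i} = {..i}" by auto
    finally show ?thesis by (simp add: pm_def)
  qed
  thus ?thesis unfolding outline_def len using pm_eq[OF assms]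
    by (auto intro!: map_cong)
qed

definition ginv :: "cdyck \<Rightarrow> nat list" where
  "ginv D = map (\<lambda>i. if snd D ! i then 0 else fst D ! i) [0..<length (fst D)]"

lemma outline_in:
  assumes e: "e \<in> I021 n"
  shows "outline e \<in> A_paths n"
proof -
  have len: "length e = n" and le: "\<And>i. i < n \<Longrightarrow> e ! i \<le> i" using I021D[OF e] by auto
  have "sorted (map (pm e) [0..<n])"
    by (auto simp: sorted_iff_nth_mono intro: pm_mono)
  moreover have "\<forall>i<n. pm e i \<le> i" using pm_le le by auto
  moreover have "\<forall>i<n. pm e i = 0 \<longrightarrow> e ! i = 0" using pm_eq[OF e] by force
  moreover have "\<forall>i<n. 0 < pm e i \<and> (\<forall>j<i. pm e j \<noteq> pm e i) \<longrightarrow> e ! i \<noteq> 0"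
  proof (intro allI impI, elim conjE)
    fix i assume i: "i < n" "0 < pm e i" "\<forall>j<i. pm e j \<noteq> pm e i"
    show "e ! i \<noteq> 0"
    proof
      assume z: "e ! i = 0"
      obtain j where j: "j \<le> i" "pm e i = e ! j" using pm_in by blast
      have "j \<noteq> i" using z j i by auto
      hence "j < i" using j by auto
      have "pm e j = pm e i" using pm_ge[of j j e] pm_mono[of j i e] j by auto
      thus False using i \<open>j < i\<close> by auto
    qed
  qed
  ultimately show ?thesis unfolding outline_eq[OF e] A_paths_def colored_dyck_def by auto
qed

lemma ginv_outline:
  assumes e: "e \<in> I021 n"
  shows "ginv (outline e) = e"
proof -
  have len: "length e = n" using I021D[OF e] by auto
  show ?thesis unfolding outline_eq[OF e] ginv_def
    by (rule nth_equalityI) (auto simp: len pm_eq[OF e])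
qed

lemma ginv_props:
  assumes D: "(d, c) \<in> A_paths n"
  shows "ginv (d, c) \<in> I021 n \<and> outline (ginv (d, c)) = (d, c)"
proof -
  have ld: "length d = n" and lc: "length c = n" and sd: "sorted d"
    and dle: "\<And>i. i < n \<Longrightarrow> d ! i \<le> i"
    and c1: "\<And>i. i < n \<Longrightarrow> d ! i = 0 \<Longrightarrow> c ! i"
    and c2: "\<And>i. i < n \<Longrightarrow> d ! i > 0 \<Longrightarrow> (\<forall>j<i. d ! j \<noteq> d ! i) \<Longrightarrow> \<not> c ! i"
    using D by (auto simp: A_paths_def colored_dyck_def)
  have dmono: "\<And>i j. i \<le> j \<Longrightarrow> j < n \<Longrightarrow> d ! i \<le> d ! j"
    using sd ld by (auto simp: sorted_iff_nth_mono)
  define e where "e = ginv (d, c)"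
  have le: "length e = n" by (simp add: e_def ginv_def ld)
  have en: "\<And>i. i < n \<Longrightarrow> e ! i = (if c ! i then 0 else d ! i)"
    by (simp add: e_def ginv_def ld)
  have ez: "\<And>i. i < n \<Longrightarrow> (e ! i = 0) = c ! i" using en c1 by force
  have eled: "\<And>i. i < n \<Longrightarrow> e ! i \<le> d ! i" using en by simp
  have inI: "e \<in> I021 n"
    unfolding I021_def inv_seqs_def avoids021_def
  proof (intro CollectI conjI allI impI notI)
    show "length e = n" by fact
    fix i assume "i < n" thus "e ! i \<le> i" using eled dle le_trans by blast
  next
    assume "\<exists>i j k. i < j \<and> j < k \<and> k < length e \<and> e ! i < e ! k \<and> e ! k < e ! j"
    then obtain i j k where ijk: "i < j" "j < k" "k < n" "e ! i < e ! k" "e ! k < e ! j"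
      using le by auto
    have "e ! k = d ! k" using en[of k] ijk by (auto split: if_splits)
    moreover have "d ! j \<le> d ! k" using dmono ijk by auto
    moreover have "e ! j \<le> d ! j" using eled ijk by auto
    ultimately show False using ijk by auto
  qed
  have "pm e i = d ! i" if i: "i < n" "c ! i" for i
  proof -
    have "pm e i \<le> d ! i"
      using pm_in[of i e] eled dmono i by (metis le_trans order.strict_trans1 le_imp_less_Suc less_Suc_eq_le)
    moreover have "d ! i \<le> pm e i"
    proof (cases "d ! i = 0")
      case False
      hence "\<exists>j<i. d ! j = d ! i" using c2[OF i(1)] i(2) by auto
      then obtain j0 where j0: "j0 < i" "d ! j0 = d ! i" by auto
      define j where "j = (LEAST j. d ! j = d ! i)"
      have jd: "d ! j = d ! i" unfolding j_def by (rule LeastI[of _ j0]) (rule j0(2))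
      have "j \<le> j0" unfolding j_def by (rule Least_le) (rule j0(2))
      have jl: "\<forall>j'<j. d ! j' \<noteq> d ! i" unfolding j_def using not_less_Least by blast
      have j: "j < i" "d ! j = d ! i" "\<forall>j'<j. d ! j' \<noteq> d ! j" using jd jl \<open>j \<le> j0\<close> j0 by auto
      have "\<not> c ! j" using c2[of j] j i False by auto
      hence "e ! j = d ! i" using en[of j] j i by auto
      thus ?thesis using pm_ge[of j i e] j by auto
    qed simp
    ultimately show ?thesis by simp
  qed
  hence pmd: "\<And>i. i < n \<Longrightarrow> c ! i \<Longrightarrow> pm e i = d ! i" by blast
  have m1: "map (pm e) [0..<n] = d"
  proof (rule nth_equalityI)
    fix i assume "i < length (map (pm e) [0..<n])"
    hence i: "i < n" by simp
    show "map (pm e) [0..<n] ! i = d ! i"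
    proof (cases "c ! i")
      case True thus ?thesis using pmd i by simp
    next
      case False
      hence "e ! i \<noteq> 0" using ez i by simp
      thus ?thesis using pm_eq[OF inI i] en i False by simp
    qed
  qed (simp add: ld)
  have m2: "map (\<lambda>i. e ! i = 0) [0..<n] = c"
    by (rule nth_equalityI) (auto simp: lc ez)
  have "outline e = (d, c)"
    unfolding outline_eq[OF inI] m1 m2 ..
  thus ?thesis using inI e_def by simp
qed

lemma stats:
  assumes e: "e \<in> I021 n" and n: "n \<ge> 1"
  shows "(dist e, asc e, zero e, ema e) =
             (turn (outline e), segment (outline e), red (outline e), return (outline e))"
proof -
  have len: "length e = n" and le: "\<And>i. i < n \<Longrightarrow> e ! i \<le> i" using I021D[OF e] by auto
  have e0: "e ! 0 = 0" using le[of 0] n by auto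
  have pm0: "pm e 0 = 0" using pm_in[of 0 e] e0 by auto
  have red: "zero e = red (outline e)"
    unfolding zero_def red_def outline_eq[OF e] by (simp add: len cong: conj_cong)
  have "{i. i < n \<and> e ! i = i} = {i. i < n \<and> pm e i = i}"
  proof (intro Collect_cong conj_cong refl iffI)
    fix i assume i: "i < n" "e ! i = i"
    show "pm e i = i" using pm_ge[of i i e] pm_le[of n e i] le i by auto
  next
    fix i assume i: "i < n" "pm e i = i"
    obtain j where j: "j \<le> i" "pm e i = e ! j" using pm_in by blast
    have "e ! j \<le> j" using le j i by auto
    hence "j = i" using j i by auto
    thus "e ! i = i" using i j by auto
  qed
  hence ret: "ema e = return (outline e)"
    unfolding ema_def return_def outline_eq[OF e] by (simp add: len cong: conj_cong)
  have "{i. i < n \<and> e ! i \<noteq> 0 \<and> (i = 0 \<or> e ! (i - 1) = 0 \<or> pm e (i - 1) \<noteq> pm e i)}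
        = Suc ` {i. i + 1 < n \<and> e ! i < e ! (i + 1)}" (is "?S = ?T")
  proof
    show "?S \<subseteq> ?T"
    proof
      fix i assume "i \<in> ?S"
      hence i: "i < n" "e ! i \<noteq> 0" "i = 0 \<or> e ! (i - 1) = 0 \<or> pm e (i - 1) \<noteq> pm e i" by auto
      then obtain k where k: "i = Suc k" using e0 by (cases i) auto
      have "e ! k < e ! Suc k"
      proof (cases "e ! k = 0")
        case False
        have "pm e k = e ! k" "pm e (Suc k) = e ! Suc k" using pm_eq[OF e] i k False by auto
        moreover have "e ! k \<le> e ! Suc k" using I021_mono[OF e, of k "Suc k"] i k False by auto
        ultimately show ?thesis using i k False by auto
      qed (use i k in auto)
      thus "i \<in> ?T" using i k by auto
    qed
  next
    show "?T \<subseteq> ?S"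
    proof
      fix i assume "i \<in> ?T"
      then obtain k where k: "i = Suc k" "k + 1 < n" "e ! k < e ! Suc k" by auto
      have "e ! k = 0 \<or> pm e k \<noteq> pm e (Suc k)"
        using pm_eq[OF e, of k] pm_eq[OF e, of "Suc k"] k by auto
      thus "i \<in> ?S" using k by auto
    qed
  qed
  note SE = this
  have s1: "segment (outline e) = card ?S"
    unfolding segment_def outline_eq[OF e] Let_def
    by (auto intro!: arg_cong[where f=card] simp: len)
  have seg: "asc e = segment (outline e)"
    unfolding s1 SE asc_def by (simp add: len card_image)
  define A where "A = {i. i + 1 < n \<and> pm e i < pm e (i + 1)}"
  have inj: "inj_on (\<lambda>i. pm e (i + 1)) A"
  proof (rule inj_onI)
    fix i i' assume ii: "i \<in> A" "i' \<in> A" "pm e (i + 1) = pm e (i' + 1)"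
    show "i = i'"
    proof (rule ccontr)
      assume "i \<noteq> i'"
      then consider "i < i'" | "i' < i" by linarith
      thus False
      proof cases
        case 1 thus False using pm_mono[of "i+1" i' e] ii by (auto simp: A_def)
      next
        case 2 thus False using pm_mono[of "i'+1" i e] ii by (auto simp: A_def)
      qed
    qed
  qed
  have img: "(\<lambda>i. pm e (i + 1)) ` A = {v \<in> set e. v > 0}"
  proof
    show "(\<lambda>i. pm e (i + 1)) ` A \<subseteq> {v \<in> set e. v > 0}"
    proof
      fix v assume "v \<in> (\<lambda>i. pm e (i + 1)) ` A"
      then obtain i where i: "i \<in> A" "v = pm e (i + 1)" by auto
      obtain j where j: "j \<le> i + 1" "pm e (i+1) = e ! j" using pm_in by blast
      have "j < n" using i j by (auto simp: A_def)
      thus "v \<in> {v \<in> set e. v > 0}" using i j len by (auto simp: A_def)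
    qed
  next
    show "{v \<in> set e. v > 0} \<subseteq> (\<lambda>i. pm e (i + 1)) ` A"
    proof
      fix v assume "v \<in> {v \<in> set e. v > 0}"
      then obtain k where k: "k < n" "e ! k = v" "v > 0" by (auto simp: in_set_conv_nth len)
      have pk: "pm e k = v" using pm_eq[OF e] k by auto
      define m where "m = (LEAST m. pm e m = v)"
      have pm: "pm e m = v" unfolding m_def by (rule LeastI[of _ k]) (rule pk)
      have "m \<le> k" unfolding m_def by (rule Least_le) (rule pk)
      have "m \<noteq> 0" using pm pm0 k by (metis less_irrefl)
      then obtain i where i: "m = Suc i" by (cases m) auto
      have "pm e i \<noteq> v" using not_less_Least[of i "\<lambda>m. pm e m = v"] i m_def by auto
      moreover have "pm e i \<le> v" using pm_mono[of i m e] pm i by auto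
      ultimately have "i \<in> A" using pm i \<open>m \<le> k\<close> k by (auto simp: A_def)
      thus "v \<in> (\<lambda>i. pm e (i + 1)) ` A" using pm i by force
    qed
  qed
  have "dist e = card A" unfolding dist_def using card_image[OF inj] img by simp
  hence tu: "dist e = turn (outline e)"
    unfolding turn_def outline_eq[OF e] A_def by (simp cong: conj_cong)
  show ?thesis using tu seg red ret by simp
qed

theorem lemma4p2:
  fixes n :: nat
  assumes "n \<ge> 1"
  shows "bij_betw outline (I021 n) (A_paths n) \<and>
         (\<forall>e \<in> I021 n. (dist e, asc e, zero e, ema e) =
             (turn (outline e), segment (outline e), red (outline e), return (outline e)))"
proof
  show "bij_betw outline (I021 n) (A_paths n)"
  proof (rule bij_betw_byWitness[where f'=ginv])
    show "\<forall>a\<in>I021 n. ginv (outline a) = a" using ginv_outline by blast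
    show "\<forall>a'\<in>A_paths n. outline (ginv a') = a'" using ginv_props by fast
    show "outline ` I021 n \<subseteq> A_paths n" using outline_in by blast
    show "ginv ` A_paths n \<subseteq> I021 n" using ginv_props by fast
  qed
  show "\<forall>e \<in> I021 n. (dist e, asc e, zero e, ema e) =
             (turn (outline e), segment (outline e), red (outline e), return (outline e))"
    using stats assms by blast
qed

end
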